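(* Let $h\ge2$ be an integer and $a,b\in\{1,\dots,h-1\}$ integers, and let $T=\operatorname{conv}\{(0,0),(a,h),(h,b)\}$. Then $\operatorname{ls}_\square(T)=h$. Moreover, $T$ is minimal (i.e. there is no lattice polygon $P'\subsetneq T$ with $\operatorname{ls}_\square(P')=h$) if and only if $a+b\ge h$.
   Context: A lattice polygon is a convex polygon (possibly degenerate, e.g. a segment) all of whose vertices lie in $\mathbb Z^2$. An affine unimodular transformation is $x\mapsto Ax+v$ with $A\in\mathbb Z^{2\times2}$, $\det A=\pm1$, $v\in\mathbb Z^2$. With $\square=[0,1]^2$, $\operatorname{ls}_\square(P)$ is the smallest $l\ge0$ such that $\varphi(P)\subseteq l\square$ for some affine unimodular $\varphi$. A lattice polygon $P$ with $\operatorname{ls}_\square(P)=h$ is minimal if no lattice polygon properly contained in $P$ has $\operatorname{ls}_\square$ equal to $h$. *)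

theory Defs
  imports "HOL-Analysis.Analysis"
begin

definition lattice_point :: "real \<times> real \<Rightarrow> bool" where
  "lattice_point p \<longleftrightarrow> fst p \<in> \<int> \<and> snd p \<in> \<int>"

(* convex hull of a finite nonempty set of lattice points (possibly degenerate) *)
definition lattice_polygon :: "(real \<times> real) set \<Rightarrow> bool" where
  "lattice_polygon P \<longleftrightarrow>
     (\<exists>S. finite S \<and> S \<noteq> {} \<and> (\<forall>p\<in>S. lattice_point p) \<and> P = convex hull S)"

definition affine_unimodular :: "(real \<times> real \<Rightarrow> real \<times> real) \<Rightarrow> bool" where
  "affine_unimodular \<phi> \<longleftrightarrow>
     (\<exists>a b c d v1 v2 :: int. (a * d - b * c = 1 \<or> a * d - b * c = -1) \<and>
        \<phi> = (\<lambda>(x, y). (of_int a * x + of_int b * y + of_int v1,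
                         of_int c * x + of_int d * y + of_int v2)))"

definition scaled_square :: "real \<Rightarrow> (real \<times> real) set" where
  "scaled_square l = {(x, y). 0 \<le> x \<and> x \<le> l \<and> 0 \<le> y \<and> y \<le> l}"

definition ls_square :: "(real \<times> real) set \<Rightarrow> real" where
  "ls_square P = Inf {l. 0 \<le> l \<and> (\<exists>\<phi>. affine_unimodular \<phi> \<and> \<phi> ` P \<subseteq> scaled_square l)}"

definition minimal_polygon :: "(real \<times> real) set \<Rightarrow> bool" where
  "minimal_polygon P \<longleftrightarrow> lattice_polygon P \<and>
     \<not> (\<exists>Q. lattice_polygon Q \<and> Q \<subset> P \<and> ls_square Q = ls_square P)"

end

theory Submission
  imports Defs
begin

lemma keyT:
  fixes h a b p q :: int
  assumes "h \<ge> 2" "1 \<le> a" "a \<le> h-1" "1 \<le> b" "b \<le> h-1" "(p,q) \<noteq> (0,0)" "p + q \<noteq> 0"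
  shows "h \<le> \<bar>p*(a-0)+q*(h-0)\<bar> \<or> h \<le> \<bar>p*(h-0)+q*(b-0)\<bar> \<or> h \<le> \<bar>p*(h-a)+q*(b-h)\<bar>"
proof -
  consider "p = 0" | "q = 0" | "p \<ge> 1" "q \<ge> 1" | "p \<le> -1" "q \<le> -1" | "p \<ge> 1" "q \<le> -1" | "p \<le> -1" "q \<ge> 1"
    by linarith
  then show ?thesis
  proof cases
    case 1
    then have "q \<noteq> 0" using assms by auto
    then have "\<bar>q\<bar> * h \<ge> 1 * h" using assms by (intro mult_right_mono) auto
    then show ?thesis using 1 assms by (simp add: abs_mult)
  next
    case 2
    then have "p \<noteq> 0" using assms by auto
    then have "\<bar>p\<bar> * h \<ge> 1 * h" using assms by (intro mult_right_mono) auto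
    then show ?thesis using 2 assms by (simp add: abs_mult)
  next
    case 3
    have "q*h \<ge> 1*h" using 3 assms by (intro mult_right_mono) auto
    moreover have "p*a \<ge> 0" using 3 assms by simp
    ultimately show ?thesis by (simp only: diff_zero mult_1 mult_minus_left) arith
  next
    case 4
    have "(-q)*h \<ge> 1*h" using 4 assms by (intro mult_right_mono) auto
    moreover have "(-p)*a \<ge> 0" using 4 assms by (intro mult_nonneg_nonneg) auto
    ultimately show ?thesis by (simp only: diff_zero mult_1 mult_minus_left) arith
  next
    case 5
    define r where "r = -q"
    have r: "r \<ge> 1" "q = -r" using 5 r_def by auto
    show ?thesis
    proof (cases "p > r")
      case True
      have "r*b \<le> r*(h-1)" using r assms by (intro mult_left_mono) auto
      moreover have "(p-r)*h \<ge> 1*h" using True assms by (intro mult_right_mono) auto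
      ultimately have "p*h + q*b \<ge> h" using r by (simp add: algebra_simps)
      then show ?thesis by (simp only: diff_zero mult_1 mult_minus_left) arith
    next
      case False
      then have "p < r" using assms r by auto
      have "p*a \<le> p*(h-1)" using 5 assms by (intro mult_left_mono) auto
      moreover have "(r-p)*h \<ge> 1*h" using \<open>p<r\<close> assms by (intro mult_right_mono) auto
      ultimately have "p*a + q*h \<le> -h" using r 5 by (simp add: algebra_simps)
      then show ?thesis by (simp only: diff_zero mult_1 mult_minus_left) arith
    qed
  next
    case 6
    define r where "r = -p"
    have r: "r \<ge> 1" "p = -r" using 6 r_def by auto
    show ?thesis
    proof (cases "q > r")
      case True
      have "r*a \<le> r*(h-1)" using r assms by (intro mult_left_mono) auto
      moreover have "(q-r)*h \<ge> 1*h" using True assms by (intro mult_right_mono) auto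
      ultimately have "p*a + q*h \<ge> h" using r by (simp add: algebra_simps)
      then show ?thesis by (simp only: diff_zero mult_1 mult_minus_left) arith
    next
      case False
      then have "q < r" using assms r by auto
      have "q*b \<le> q*(h-1)" using 6 assms by (intro mult_left_mono) auto
      moreover have "(r-q)*h \<ge> 1*h" using \<open>q<r\<close> assms by (intro mult_right_mono) auto
      ultimately have "p*h + q*b \<le> -h" using r 6 by (simp add: algebra_simps)
      then show ?thesis by (simp only: diff_zero mult_1 mult_minus_left) arith
    qed
  qed
qed

lemma keyQ:
  fixes h a b p q :: int
  assumes "h \<ge> 2" "1 \<le> a" "a \<le> h-1" "1 \<le> b" "b \<le> h-1" "a + b \<le> h - 1" "p \<noteq> 0"
  shows "h \<le> \<bar>p*(a-0)+q*((h-1)-0)\<bar> \<or> h \<le> \<bar>p*(h-0)+q*(b-0)\<bar> \<or> h \<le> \<bar>p*(h-a)+q*(b-(h-1))\<bar>"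
proof -
  have main: "h \<le> P*h+Q*b \<or> h \<le> P*(h-a)+Q*(b-(h-1))" if "P \<ge> 1" for P Q :: int
  proof (cases "Q \<ge> 0")
    case True
    have "P*h \<ge> 1*h" using that assms by (intro mult_right_mono) auto
    moreover have "Q*b \<ge> 0" using True assms by simp
    ultimately show ?thesis by (simp only: diff_zero mult_1 mult_minus_left) arith
  next
    case False
    define r where "r = -Q"
    have r: "r \<ge> 1" "Q = -r" using False r_def by auto
    show ?thesis
    proof (cases "P > r")
      case True
      have "r*b \<le> r*(h-1)" using r assms by (intro mult_left_mono) auto
      moreover have "(P-r)*h \<ge> 1*h" using True assms by (intro mult_right_mono) auto
      ultimately have "P*h + Q*b \<ge> h" using r by (simp add: algebra_simps)
      then show ?thesis by (simp only: diff_zero mult_1 mult_minus_left) arith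
    next
      case False
      have "r*(h-1-b) \<ge> P*(h-1-b)" using False assms by (intro mult_right_mono) auto
      moreover have "P*(h-1-b) \<ge> P*a" using that assms by (intro mult_left_mono) auto
      moreover have "P*h \<ge> 1*h" using that assms by (intro mult_right_mono) auto
      ultimately have "P*(h-a)+Q*(b-(h-1)) \<ge> h" using r by (simp add: algebra_simps)
      then show ?thesis by (simp only: diff_zero mult_1 mult_minus_left) arith
    qed
  qed
  show ?thesis
  proof (cases "p \<ge> 1")
    case True
    from main[OF True, of q] show ?thesis by auto
  next
    case False
    then have "-p \<ge> 1" using assms by auto
    from main[OF this, of "-q"] show ?thesis by (auto simp: algebra_simps)
  qed
qed

lemma aff_mk:
  fixes a b c d v1 v2 :: int
  assumes "a*d - b*c = 1"
  shows "affine_unimodular (\<lambda>(x,y). (of_int a * x + of_int b*y + of_int v1, of_int c*x + of_int d*y + of_int v2))"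
  using assms unfolding affine_unimodular_def by blast

lemma ls_upper:
  assumes "affine_unimodular \<phi>" "\<phi> ` P \<subseteq> scaled_square l" "0 \<le> l"
  shows "ls_square P \<le> l"
  unfolding ls_square_def
  by (rule cInf_lower) (use assms in \<open>auto intro: bdd_belowI[of _ 0]\<close>)

lemma ls_eq:
  assumes "\<And>l \<phi>. affine_unimodular \<phi> \<Longrightarrow> \<phi> ` P \<subseteq> scaled_square l \<Longrightarrow> m \<le> l"
    "affine_unimodular \<psi>" "\<psi> ` P \<subseteq> scaled_square m" "0 \<le> m"
  shows "ls_square P = m"
  unfolding ls_square_def
  by (rule cInf_eq_minimum) (use assms in auto)

lemma diff_bound:
  fixes l :: real and p q v x1 x2 y1 y2 h :: int
  assumes "(0::real) \<le> of_int p * of_int x1 + of_int q * of_int x2 + of_int v"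
   "of_int p * of_int x1 + of_int q * of_int x2 + of_int v \<le> l"
   "(0::real) \<le> of_int p * of_int y1 + of_int q * of_int y2 + of_int v"
   "of_int p * of_int y1 + of_int q * of_int y2 + of_int v \<le> l"
   "h \<le> \<bar>p*(y1-x1)+q*(y2-x2)\<bar>"
  shows "of_int h \<le> l"
proof -
  have "(of_int h::real) \<le> of_int \<bar>p*(y1-x1)+q*(y2-x2)\<bar>" using assms(5) by (simp only: of_int_le_iff)
  also have "\<dots> = \<bar>(of_int p * of_int y1 + of_int q * of_int y2 + of_int v) - (of_int p * of_int x1 + of_int q * of_int x2 + of_int v)\<bar>"
    by (simp add: algebra_simps)
  finally have hh: "(of_int h::real) \<le> \<bar>(of_int p * of_int y1 + of_int q * of_int y2 + of_int v) - (of_int p * of_int x1 + of_int q * of_int x2 + of_int v)\<bar>" .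
  have aux: "\<bar>B' - A'\<bar> \<le> l" if "0\<le>A'" "A'\<le>l" "0\<le>B'" "B'\<le>l" for A' B' :: real
    using that by arith
  show ?thesis using order_trans[OF hh aux[OF assms(1-4)]] .
qed

lemma ls_bound3:
  fixes x1 x2 y1 y2 z1 z2 h :: int and E :: "int \<Rightarrow> int \<Rightarrow> bool"
  assumes X: "(of_int x1, of_int x2) \<in> P" and Y: "(of_int y1, of_int y2) \<in> P"
    and Z: "(of_int z1, of_int z2) \<in> P"
  and key: "\<And>p q. (p,q) \<noteq> (0,0) \<Longrightarrow> \<not> E p q \<Longrightarrow> h \<le> \<bar>p*(y1-x1)+q*(y2-x2)\<bar> \<or> h \<le> \<bar>p*(z1-x1)+q*(z2-x2)\<bar> \<or> h \<le> \<bar>p*(z1-y1)+q*(z2-y2)\<bar>"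
  and exc: "\<And>p q r t. E p q \<Longrightarrow> E r t \<Longrightarrow> p*t - q*r = 0"
  and phi: "affine_unimodular \<phi>" "\<phi> ` P \<subseteq> scaled_square l"
  shows "of_int h \<le> l"
proof -
  obtain a b c d v1 v2 :: int where det: "a*d-b*c = 1 \<or> a*d-b*c = -1" and ph: "\<phi> = (\<lambda>(x,y). (of_int a * x + of_int b * y + of_int v1,
                         of_int c * x + of_int d * y + of_int v2))"
    using phi(1) unfolding affine_unimodular_def by blast
  have rows: "(\<not> E a b \<and> (a,b) \<noteq> (0,0)) \<or> (\<not> E c d \<and> (c,d) \<noteq> (0,0))"
    using exc[of a b c d] det by auto
  have inX: "\<phi> (of_int x1, of_int x2) \<in> scaled_square l" using X phi(2) by blast
  have inY: "\<phi> (of_int y1, of_int y2) \<in> scaled_square l" using Y phi(2) by blast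
  have inZ: "\<phi> (of_int z1, of_int z2) \<in> scaled_square l" using Z phi(2) by blast
  have gen: "of_int h \<le> l" if
    hx: "(0::real) \<le> of_int p * of_int x1 + of_int q * of_int x2 + of_int v" "of_int p * of_int x1 + of_int q * of_int x2 + of_int v \<le> l"
    and hy: "(0::real) \<le> of_int p * of_int y1 + of_int q * of_int y2 + of_int v" "of_int p * of_int y1 + of_int q * of_int y2 + of_int v \<le> l"
    and hz: "(0::real) \<le> of_int p * of_int z1 + of_int q * of_int z2 + of_int v" "of_int p * of_int z1 + of_int q * of_int z2 + of_int v \<le> (l::real)"
    and pq: "(p,q) \<noteq> (0,0)" "\<not> E p q"
    for p q v
  proof -
    from key[OF pq] consider "h \<le> \<bar>p*(y1-x1)+q*(y2-x2)\<bar>" | "h \<le> \<bar>p*(z1-x1)+q*(z2-x2)\<bar>" | "h \<le> \<bar>p*(z1-y1)+q*(z2-y2)\<bar>"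
      by blast
    then show ?thesis
    proof cases
      case 1 then show ?thesis using diff_bound[OF hx hy] by blast
    next
      case 2 then show ?thesis using diff_bound[OF hx hz] by blast
    next
      case 3 then show ?thesis using diff_bound[OF hy hz] by blast
    qed
  qed
  from rows show ?thesis
  proof
    assume r: "\<not> E a b \<and> (a,b) \<noteq> (0,0)"
    show ?thesis
      by (rule gen[where p=a and q=b and v=v1]) (use inX inY inZ r in \<open>auto simp: ph scaled_square_def\<close>)
  next
    assume r: "\<not> E c d \<and> (c,d) \<noteq> (0,0)"
    show ?thesis
      by (rule gen[where p=c and q=d and v=v2]) (use inX inY inZ r in \<open>auto simp: ph scaled_square_def\<close>)
  qed
qed

lemma convex_strip:
  fixes \<alpha> \<beta> L U :: real
  shows "convex {z::real\<times>real. L \<le> \<alpha> * fst z + \<beta> * snd z \<and> \<alpha> * fst z + \<beta> * snd z \<le> U}"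
proof -
  have "{z::real\<times>real. L \<le> \<alpha> * fst z + \<beta> * snd z \<and> \<alpha> * fst z + \<beta> * snd z \<le> U}
     = {z. inner (\<alpha>,\<beta>) z \<le> U} \<inter> {z. inner (-\<alpha>,-\<beta>) z \<le> -L}"
    by (auto simp: inner_Pair_0 inner_Pair)
  then show ?thesis by (simp add: convex_Int convex_halfspace_le)
qed

lemma hull3:
  assumes "s \<in> convex hull {(0::real,0::real),(A1,A2),(C1,C2)}"
  obtains m n where "0\<le>m" "0\<le>n" "m+n\<le>1" "s = (m*A1 + n*C1, m*A2 + n*C2)"
proof -
  from assms obtain u m n where "0 \<le> u" "0 \<le> m" "0 \<le> n" "u+m+n = 1"
    "s = u *\<^sub>R (0,0) + m *\<^sub>R (A1,A2) + n *\<^sub>R (C1,C2)"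
    unfolding convex_hull_3 by blast
  then show ?thesis using that[of m n] by auto
qed


lemma Tbounds:
  fixes A B H :: real
  assumes "1 \<le> A" "A \<le> H-1" "1 \<le> B" "B \<le> H-1"
    and s: "s \<in> convex hull {(0,0),(A,H),(H,B)}"
  shows "0 \<le> fst s" "fst s \<le> H" "0 \<le> snd s" "snd s \<le> H"
    "A - H \<le> fst s - snd s" "fst s - snd s \<le> H - B"
    "s \<noteq> (0,0) \<Longrightarrow> 0 < fst s \<and> 0 < snd s"
    "s \<noteq> (A,H) \<Longrightarrow> snd s < H \<and> A - H < fst s - snd s"
    "s \<noteq> (H,B) \<Longrightarrow> fst s < H \<and> B - H < snd s - fst s"
proof -
  obtain m n where mn: "0\<le>m" "0\<le>n" "m+n\<le>1" "s = (m*A + n*H, m*H + n*B)"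
    using hull3[OF s] by blast
  have f: "fst s = m*A + n*H" "snd s = m*H + n*B" using mn by auto
  have h1: "m*A \<ge> m*1" "n*H \<ge> n*1" "m*H \<ge> m*1" "n*B \<ge> n*1"
    by (rule mult_left_mono; use mn assms in linarith)+
  have h2: "(1-m-n)*H \<ge> (1-m-n)*1" using mn assms by (intro mult_left_mono) auto
  have h3: "m*(H-A) \<ge> m*1" "n*(H-B) \<ge> n*1"
    by (rule mult_left_mono; use mn assms in linarith)+
  have h4: "(1-m)*(H-A) \<ge> (1-m)*1" "(1-n)*(H-B) \<ge> (1-n)*1"
    by (rule mult_left_mono; use mn assms in linarith)+
  show "0 \<le> fst s" "fst s \<le> H" "0 \<le> snd s" "snd s \<le> H"
    "A - H \<le> fst s - snd s" "fst s - snd s \<le> H - B"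
    using f h1 h2 h3 h4 mn(1-3) by (auto simp: algebra_simps)
  show "s \<noteq> (0,0) \<Longrightarrow> 0 < fst s \<and> 0 < snd s"
  proof -
    assume ne: "s \<noteq> (0,0)"
    have "m + n > 0"
    proof (rule ccontr)
      assume "\<not> m + n > 0"
      then have "m = 0" "n = 0" using mn by auto
      then show False using ne mn by auto
    qed
    then show ?thesis using f h1 by (auto simp: algebra_simps)
  qed
  show "s \<noteq> (A,H) \<Longrightarrow> snd s < H \<and> A - H < fst s - snd s"
  proof -
    assume ne: "s \<noteq> (A,H)"
    have "1 - m + n > 0"
    proof (rule ccontr)
      assume "\<not> 1 - m + n > 0"
      then have "m = 1" "n = 0" using mn by auto
      then show False using ne mn by auto
    qed
    then show ?thesis using f h1 h2 h3 h4 mn(1-3) by (auto simp: algebra_simps)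
  qed
  show "s \<noteq> (H,B) \<Longrightarrow> fst s < H \<and> B - H < snd s - fst s"
  proof -
    assume ne: "s \<noteq> (H,B)"
    have "1 - n + m > 0"
    proof (rule ccontr)
      assume "\<not> 1 - n + m > 0"
      then have "n = 1" "m = 0" using mn by auto
      then show False using ne mn by auto
    qed
    then show ?thesis using f h1 h2 h3 h4 mn(1-3) by (auto simp: algebra_simps)
  qed
qed


lemma region_ls:
  assumes "Q = convex hull S" "S \<subseteq> R" "convex R" "affine_unimodular \<phi>" "\<phi> ` R \<subseteq> scaled_square l" "0 \<le> l"
  shows "ls_square Q \<le> l"
proof -
  have "Q \<subseteq> R" using assms(1-3) by (simp add: hull_minimal)
  then have "\<phi> ` Q \<subseteq> scaled_square l" using assms(5) by blast
  then show ?thesis using ls_upper assms(4,6) by blast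
qed

lemma excT: "p+q=0 \<Longrightarrow> r+t=0 \<Longrightarrow> p*t - q*r = (0::int)"
proof -
  assume "p+q=0" "r+t=0"
  then have "q = -p" "t = -r" by simp_all
  then show ?thesis by simp
qed

lemma int_lt:
  fixes x y :: real
  assumes "x \<in> \<int>" "y \<in> \<int>" "x < y" shows "x \<le> y - 1"
proof -
  obtain i j where "x = of_int i" "y = of_int j" using assms(1,2) by (auto elim!: Ints_cases)
  then show ?thesis using assms(3) by simp
qed

lemma aff_id: "affine_unimodular (\<lambda>z. z)"
proof -
  have "affine_unimodular (\<lambda>(x,y). (of_int 1 * x + of_int 0*y + of_int 0, of_int 0*x + of_int 1*y + of_int (0::int)))"
    by (rule aff_mk) simp
  moreover have "(\<lambda>(x::real,y::real). (of_int 1 * x + of_int 0*y + of_int 0, of_int 0*x + of_int 1*y + of_int (0::int))) = (\<lambda>z. z)"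
    by (auto simp: fun_eq_iff)
  ultimately show ?thesis by simp
qed

lemma convex_sq: "convex (scaled_square l)"
proof -
  have "scaled_square l = {0..l} \<times> {0..l}" by (auto simp: scaled_square_def)
  then show ?thesis by (simp add: convex_Times)
qed

theorem mainTheorem6:
  fixes h a b :: int
  assumes "h \<ge> 2" and "1 \<le> a" and "a \<le> h - 1" and "1 \<le> b" and "b \<le> h - 1"
  defines "T \<equiv> convex hull {(0, 0), (real_of_int a, real_of_int h), (real_of_int h, real_of_int b)}"
  shows "ls_square T = real_of_int h \<and> (minimal_polygon T \<longleftrightarrow> a + b \<ge> h)"
proof -
  let ?A = "real_of_int a" and ?B = "real_of_int b" and ?H = "real_of_int h"
  have bnd: "1 \<le> ?A" "?A \<le> ?H - 1" "1 \<le> ?B" "?B \<le> ?H - 1" using assms(1-5) by simp_all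
  have TB: "0 \<le> fst s" "fst s \<le> ?H" "0 \<le> snd s" "snd s \<le> ?H"
    "?A - ?H \<le> fst s - snd s" "fst s - snd s \<le> ?H - ?B"
    "s \<noteq> (0,0) \<Longrightarrow> 0 < fst s \<and> 0 < snd s"
    "s \<noteq> (?A,?H) \<Longrightarrow> snd s < ?H \<and> ?A - ?H < fst s - snd s"
    "s \<noteq> (?H,?B) \<Longrightarrow> fst s < ?H \<and> ?B - ?H < snd s - fst s"
    if "s \<in> T" for s
    using Tbounds[OF bnd, of s] that unfolding T_def by blast+
  have T_sq: "T \<subseteq> scaled_square ?H"
  proof
    fix s assume "s \<in> T"
    from TB(1-4)[OF this] show "s \<in> scaled_square ?H" by (cases s) (auto simp: scaled_square_def)
  qed
  have verts: "(of_int 0, of_int 0) \<in> T" "(?A,?H) \<in> T" "(?H,?B) \<in> T"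
    by (simp_all add: T_def hull_inc)
  have Hnn: "0 \<le> ?H" using assms(1) by simp
  have lsT: "ls_square T = ?H"
  proof (rule ls_eq[OF _ aff_id _ Hnn])
    fix l \<phi> assume "affine_unimodular \<phi>" "\<phi> ` T \<subseteq> scaled_square l"
    show "?H \<le> l"
      by (rule ls_bound3[where ?x1.0=0 and ?x2.0=0 and ?y1.0=a and ?y2.0=h and ?z1.0=h and ?z2.0=b and E="\<lambda>p q. p+q=0"])
        (use verts keyT[OF assms(1-5)] excT \<open>affine_unimodular \<phi>\<close> \<open>\<phi> ` T \<subseteq> scaled_square l\<close> in \<open>auto simp: algebra_simps\<close>)
  next
    show "(\<lambda>z. z) ` T \<subseteq> scaled_square ?H" using T_sq by simp
  qed
  have latT: "lattice_polygon T"
    unfolding lattice_polygon_def T_def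
    by (rule exI[of _ "{(0, 0), (real_of_int a, real_of_int h), (real_of_int h, real_of_int b)}"])
       (auto simp: lattice_point_def)
  have fwd: "h \<le> a + b" if minT: "minimal_polygon T"
  proof (rule ccontr)
    assume "\<not> h \<le> a + b"
    then have ab: "a + b \<le> h - 1" by simp
    define Q where "Q = convex hull {(0::real, 0::real), (?A, real_of_int (h-1)), (?H, ?B)}"
    have latQ: "lattice_polygon Q"
      unfolding lattice_polygon_def Q_def
      by (rule exI[of _ "{(0::real, 0::real), (?A, real_of_int (h-1)), (?H, ?B)}"])
         (auto simp: lattice_point_def)
    have D: "?H * ?H - ?A * ?B > 0"
    proof -
      have "?A * ?B < ?H * ?H" using bnd by (intro mult_strict_mono) auto
      then show ?thesis by simp
    qed
    have P_in: "(?A, real_of_int (h-1)) \<in> T"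
    proof -
      define D where "D = ?H * ?H - ?A * ?B"
      define v where "v = (?H*?H - ?H - ?A*?B) / D"
      define w where "w = ?A / D"
      have Dp: "D > 0" using D D_def by simp
      have "?A * ?B \<le> (?H-1)*(?H-1)" using bnd by (intro mult_mono) auto
      then have "0 \<le> ?H*?H - ?H - ?A*?B" using bnd by (simp add: algebra_simps)
      then have v0: "0 \<le> v" using Dp unfolding v_def by simp
      have w0: "0 \<le> w" using Dp bnd unfolding w_def by simp
      have "v + w = (?H*?H - ?H - ?A*?B + ?A)/D" unfolding v_def w_def by (simp add: add_divide_distrib)
      also have "\<dots> \<le> 1" using Dp bnd by (simp add: pos_divide_le_eq D_def)
      finally have vw: "v + w \<le> 1" .
      have e1: "v * ?A + w * ?H = ?A" using Dp unfolding v_def w_def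
        by (simp add: field_simps) (simp add: D_def algebra_simps)
      have e2: "v * ?H + w * ?B = real_of_int (h-1)" using Dp unfolding v_def w_def
        by (simp add: field_simps) (simp add: D_def algebra_simps)
      have eq: "(?A, real_of_int (h-1)) = (1 - v - w) *\<^sub>R (0,0) + v *\<^sub>R (?A,?H) + w *\<^sub>R (?H,?B)"
        using e1 e2 by (simp add: mult.commute)
      show ?thesis unfolding T_def convex_hull_3
        using v0 w0 vw eq by (intro CollectI exI[of _ "1-v-w"] exI[of _ v] exI[of _ w]) auto
    qed
    have QT: "Q \<subseteq> T"
      unfolding Q_def
      by (rule hull_minimal) (use verts P_in in \<open>auto simp: T_def convex_convex_hull\<close>)
    have Qstrip: "Q \<subseteq> {z. 0 \<le> 0 * fst z + 1 * snd z \<and> 0 * fst z + 1 * snd z \<le> ?H - 1}"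
      unfolding Q_def
      by (rule hull_minimal[of _ _ convex, OF _ convex_strip]) (use bnd Hnn assms(1) in auto)
    have "(?A, ?H) \<notin> Q" using Qstrip by auto
    then have QsT: "Q \<subset> T" using QT verts by blast
    have Q_sq: "Q \<subseteq> scaled_square ?H" using QT T_sq by blast
    have Qv: "(of_int 0, of_int 0) \<in> Q" "(?A, real_of_int (h-1)) \<in> Q" "(?H, ?B) \<in> Q"
      by (simp_all add: Q_def hull_inc)
    have lsQ: "ls_square Q = ?H"
    proof (rule ls_eq[OF _ aff_id _ Hnn])
      fix l \<phi> assume "affine_unimodular \<phi>" "\<phi> ` Q \<subseteq> scaled_square l"
      show "?H \<le> l"
        by (rule ls_bound3[where ?x1.0=0 and ?x2.0=0 and ?y1.0=a and ?y2.0="h-1" and ?z1.0=h and ?z2.0=b and E="\<lambda>p q. p=0"])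
          (use Qv keyQ[OF assms(1-5) ab] \<open>affine_unimodular \<phi>\<close> \<open>\<phi> ` Q \<subseteq> scaled_square l\<close> in auto)
    next
      show "(\<lambda>z. z) ` Q \<subseteq> scaled_square ?H" using Q_sq by simp
    qed
    show False using minT latQ QsT lsQ lsT unfolding minimal_polygon_def by auto
  qed
  have bwd: "minimal_polygon T" if ab: "h \<le> a + b"
  proof -
    have "ls_square Q \<le> ?H - 1" if latQ: "lattice_polygon Q" and QsT: "Q \<subset> T" for Q
    proof -
      obtain S where S: "finite S" "S \<noteq> {}" "\<forall>p\<in>S. lattice_point p" "Q = convex hull S"
        using latQ unfolding lattice_polygon_def by blast
      have SQ: "S \<subseteq> Q" unfolding S(4) by (rule hull_subset)
      have SZ: "fst s \<in> \<int>" "snd s \<in> \<int>" "fst s - snd s \<in> \<int>" "snd s - fst s \<in> \<int>" if "s \<in> S" for s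
      proof -
        have "lattice_point s" using S(3) that by blast
        then have z: "fst s \<in> \<int>" "snd s \<in> \<int>" unfolding lattice_point_def by blast+
        then show "fst s \<in> \<int>" "snd s \<in> \<int>" "fst s - snd s \<in> \<int>" "snd s - fst s \<in> \<int>"
          by (simp_all add: Ints_diff)
      qed
      have STs: "s \<in> T" if "s \<in> S" for s using that SQ QsT by blast
      have Hm: "0 \<le> ?H - 1" using assms(1) by simp
      have "\<not> ((0,0) \<in> Q \<and> (?A,?H) \<in> Q \<and> (?H,?B) \<in> Q)"
      proof
        assume "(0,0) \<in> Q \<and> (?A,?H) \<in> Q \<and> (?H,?B) \<in> Q"
        then have "T \<subseteq> Q" unfolding T_def
          by (intro hull_minimal) (auto simp: S(4) convex_convex_hull)
        then show False using QsT by blast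
      qed
      then consider "(0,0) \<notin> Q" | "(?A,?H) \<notin> Q" | "(?H,?B) \<notin> Q" by blast
      then show ?thesis
      proof cases
        case 1
        let ?R = "{z::real\<times>real. 1 \<le> 1 * fst z + 0 * snd z \<and> 1 * fst z + 0 * snd z \<le> ?H} \<inter>
                  {z. 1 \<le> 0 * fst z + 1 * snd z \<and> 0 * fst z + 1 * snd z \<le> ?H}"
        show ?thesis
        proof (rule region_ls[OF S(4), of ?R])
          show "S \<subseteq> ?R"
          proof
            fix s assume s: "s \<in> S"
            have ne: "s \<noteq> (0,0)" using s SQ 1 by blast
            have "0 \<le> fst s - 1" "0 \<le> snd s - 1"
              using TB(7)[OF STs[OF s] ne] int_lt[of 0 "fst s"] int_lt[of 0 "snd s"] SZ[OF s] by auto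
            then show "s \<in> ?R" using TB(2,4)[OF STs[OF s]] by auto
          qed
          show "convex ?R" by (intro convex_Int convex_strip)
          show "affine_unimodular (\<lambda>(x,y). (of_int 1 * x + of_int 0*y + of_int (-1), of_int 0*x + of_int 1*y + of_int (-1::int)))"
            by (rule aff_mk) simp
          show "(\<lambda>(x,y). (of_int 1 * x + of_int 0*y + of_int (-1), of_int 0*x + of_int 1*y + of_int (-1::int))) ` ?R \<subseteq> scaled_square (?H - 1)"
            by (auto simp: scaled_square_def)
        qed (rule Hm)
      next
        case 2
        let ?R = "{z::real\<times>real. 0 \<le> 0 * fst z + 1 * snd z \<and> 0 * fst z + 1 * snd z \<le> ?H - 1} \<inter>
                  {z. ?A - ?H + 1 \<le> 1 * fst z + (-1) * snd z \<and> 1 * fst z + (-1) * snd z \<le> ?H - ?B}"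
        show ?thesis
        proof (rule region_ls[OF S(4), of ?R])
          show "S \<subseteq> ?R"
          proof
            fix s assume s: "s \<in> S"
            have ne: "s \<noteq> (?A,?H)" using s SQ 2 by blast
            have "snd s \<le> ?H - 1" "?A - ?H \<le> fst s - snd s - 1"
              using TB(8)[OF STs[OF s] ne] int_lt[of "snd s" ?H] int_lt[of "?A - ?H" "fst s - snd s"] SZ[OF s] by auto
            then show "s \<in> ?R" using TB(3,6)[OF STs[OF s]] by auto
          qed
          show "convex ?R" by (intro convex_Int convex_strip)
          show "affine_unimodular (\<lambda>(x,y). (of_int 1 * x + of_int (-1)*y + of_int (h-a-1), of_int 0*x + of_int 1*y + of_int (0::int)))"
            by (rule aff_mk) simp
          show "(\<lambda>(x,y). (of_int 1 * x + of_int (-1)*y + of_int (h-a-1), of_int 0*x + of_int 1*y + of_int (0::int))) ` ?R \<subseteq> scaled_square (?H - 1)"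
          proof -
            have "?A + ?B \<ge> ?H" using ab by simp
            then show ?thesis by (auto simp: scaled_square_def)
          qed
        qed (rule Hm)
      next
        case 3
        let ?R = "{z::real\<times>real. 0 \<le> 1 * fst z + 0 * snd z \<and> 1 * fst z + 0 * snd z \<le> ?H - 1} \<inter>
                  {z. ?B - ?H + 1 \<le> (-1) * fst z + 1 * snd z \<and> (-1) * fst z + 1 * snd z \<le> ?H - ?A}"
        show ?thesis
        proof (rule region_ls[OF S(4), of ?R])
          show "S \<subseteq> ?R"
          proof
            fix s assume s: "s \<in> S"
            have ne: "s \<noteq> (?H,?B)" using s SQ 3 by blast
            have "fst s \<le> ?H - 1" "?B - ?H \<le> snd s - fst s - 1"
              using TB(9)[OF STs[OF s] ne] int_lt[of "fst s" ?H] int_lt[of "?B - ?H" "snd s - fst s"] SZ[OF s] by auto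
            then show "s \<in> ?R" using TB(1,5)[OF STs[OF s]] by auto
          qed
          show "convex ?R" by (intro convex_Int convex_strip)
          show "affine_unimodular (\<lambda>(x,y). (of_int 1 * x + of_int 0*y + of_int 0, of_int (-1)*x + of_int 1*y + of_int (h-b-1::int)))"
            by (rule aff_mk) simp
          show "(\<lambda>(x,y). (of_int 1 * x + of_int 0*y + of_int 0, of_int (-1)*x + of_int 1*y + of_int (h-b-1::int))) ` ?R \<subseteq> scaled_square (?H - 1)"
          proof -
            have "?A + ?B \<ge> ?H" using ab by simp
            then show ?thesis by (auto simp: scaled_square_def)
          qed
        qed (rule Hm)
      qed
    qed
    then show ?thesis using latT lsT unfolding minimal_polygon_def by force
  qed
  show ?thesis using lsT fwd bwd by blast
qed

end
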